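(* Let $X(t),t\in\mathbb{Z}^d$, be a stationary max-stable rf with unit Fréchet marginals and spectral tail rf $\Theta$. Then for every $x=(x_i)_{i\in\mathbb{Z}^d}$ with finitely many components in $(0,\infty)$ and all other components equal to $\infty$, $$-\ln P(X(i)\le x_i,\ i\in\mathbb{Z}^d)=\sum_{i\in\mathbb{Z}^d}\frac1{x_i}P\big(\mathcal I_A(\Theta/(B^{-i}x))=0\big),$$ where $\Theta/(B^{-i}x)=(\Theta(j)/x_{j+i})_{j\in\mathbb{Z}^d}$, with $a/\infty=0$. In particular the law of $X$ is determined by the law of $\Theta$.
   Context: $E=[0,\infty)^{\mathbb{Z}^d}$; shift $(B^hf)(t)=f(t-h)$; $\mathcal S(f)=\sum_tf(t)$. A max-stable rf $X$ with unit Fréchet marginals has a spectral rf $Z$: non-negative, $E Z(t)=1$, with $-\ln P(X(t_i)\le x_i,i\le n)=E[\max_{i\le n}Z(t_i)/x_i]$; stationarity of $X$ is equivalent to $E[Z(h)F(Z)]=E[Z(0)F(B^hZ)]$ for all $h$ and all 0-homogeneous measurable $F:E\to[0,\infty]$. The spectral tail rf $\Theta$ is given by $P(\Theta\in A)=E[Z(0)\mathbf 1(Z/Z(0)\in A)]$. Fix a translation-invariant total order on $\mathbb{Z}^d$; the first maximum functional is $\mathcal I_A(f)=\min\{j:f(j)=\max_if(i)\}$ if $\mathcal S(f)<\infty$ and $\max_if(i)>0$, and $\mathcal I_A(f)=\infty$ otherwise. *)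

theory Defs
  imports "HOL-Probability.Probability"
begin

definition transl_inv_total_order :: "(int^'d \<Rightarrow> int^'d \<Rightarrow> bool) \<Rightarrow> bool" where
  "transl_inv_total_order le \<longleftrightarrow>
     (\<forall>a. le a a) \<and> (\<forall>a b. le a b \<and> le b a \<longrightarrow> a = b) \<and>
     (\<forall>a b c. le a b \<and> le b c \<longrightarrow> le a c) \<and> (\<forall>a b. le a b \<or> le b a) \<and>
     (\<forall>a b h. le a b \<longrightarrow> le (a + h) (b + h))"

text \<open>First maximum functional; None encodes the value infinity.
  S(f) < infinity is rendered as summability of f over the whole index set.\<close>
definition first_max :: "('i \<Rightarrow> 'i \<Rightarrow> bool) \<Rightarrow> ('i \<Rightarrow> real) \<Rightarrow> 'i option" where
  "first_max le f =
     (if f summable_on UNIV \<and> (SUP i. f i) > 0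
      then Some (THE j. f j = (SUP i. f i) \<and> (\<forall>k. f k = (SUP i. f i) \<longrightarrow> le j k))
      else None)"

end

theory Submission imports Defs begin

lemma tio_props:
  assumes "transl_inv_total_order le"
  shows "le a a" "le a b \<Longrightarrow> le b a \<Longrightarrow> a = b" "le a b \<Longrightarrow> le b c \<Longrightarrow> le a c"
    "le a b \<or> le b a" "le (a + h) (b + h) \<longleftrightarrow> le a b"
proof -
  show "le a a" "le a b \<Longrightarrow> le b a \<Longrightarrow> a = b" "le a b \<Longrightarrow> le b c \<Longrightarrow> le a c"
    "le a b \<or> le b a" using assms unfolding transl_inv_total_order_def by blast+
  have *: "\<And>a b h. le a b \<Longrightarrow> le (a + h) (b + h)" using assms unfolding transl_inv_total_order_def by blast
  show "le (a + h) (b + h) \<longleftrightarrow> le a b"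
    using *[of a b h] *[of "a+h" "b+h" "-h"] by auto
qed

lemma le_least_exists:
  assumes ord: "transl_inv_total_order le" and "finite A" "A \<noteq> {}"
  shows "\<exists>m\<in>A. \<forall>k\<in>A. le m k"
  using assms(2,3)
proof (induction A rule: finite_ne_induct)
  case (singleton x) then show ?case using tio_props(1)[OF ord] by auto
next
  case (insert x F)
  then obtain m where m: "m \<in> F" "\<forall>k\<in>F. le m k" by blast
  show ?case
  proof (cases "le x m")
    case True then show ?thesis using m tio_props(1,3)[OF ord] by blast
  next
    case False then have "le m x" using tio_props(4)[OF ord] by blast
    then show ?thesis using m tio_props(1)[OF ord] by blast
  qed
qed

lemma first_max_char:
  fixes g :: "int^'d \<Rightarrow> real"
  assumes ord: "transl_inv_total_order le" and fin: "finite S" and zero: "\<And>j. j \<notin> S \<Longrightarrow> g j = 0"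
  shows "first_max le g = Some 0 \<longleftrightarrow> g 0 > 0 \<and> (\<forall>k. g k \<le> g 0 \<and> (g k = g 0 \<longrightarrow> le 0 k))"
proof -
  have summ: "g summable_on UNIV"
  proof -
    have "g summable_on S" using fin by simp
    then show ?thesis using zero by (rule summable_on_cong_neutral[THEN iffD1, rotated -1]) auto
  qed
  have rfin: "finite (range g)"
    by (rule finite_subset[of _ "insert 0 (g ` S)"]) (use zero fin in auto)
  define m where "m = (SUP i. g i)"
  have mM: "m = Max (range g)" unfolding m_def using rfin by (simp add: cSup_eq_Max)
  have ge: "g k \<le> m" for k using rfin mM by simp
  have mr: "m \<in> range g" using rfin mM by simp
  let ?P = "\<lambda>j. g j = m \<and> (\<forall>k. g k = m \<longrightarrow> le j k)"
  have fm: "first_max le g = (if m > 0 then Some (THE j. ?P j) else None)"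
    unfolding first_max_def m_def using summ by simp
  show ?thesis
  proof
    assume A: "first_max le g = Some 0"
    then have mpos: "m > 0" and th: "(THE j. ?P j) = 0" using fm by (auto split: if_splits)
    have "finite {j. g j = m}" by (rule finite_subset[OF _ fin]) (use zero mpos in force)
    moreover have "{j. g j = m} \<noteq> {}" using mr by auto
    ultimately obtain j where j: "g j = m" "\<forall>k\<in>{j. g j = m}. le j k"
      using le_least_exists[OF ord] by blast
    have ex: "\<exists>!j. ?P j"
    proof (rule ex1I[of _ j])
      show "?P j" using j by auto
      fix j' assume "?P j'" then show "j' = j" using j tio_props(2)[OF ord] by auto
    qed
    have "?P 0" using theI'[OF ex] th by simp
    then show "g 0 > 0 \<and> (\<forall>k. g k \<le> g 0 \<and> (g k = g 0 \<longrightarrow> le 0 k))" using mpos ge by auto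
  next
    assume B: "g 0 > 0 \<and> (\<forall>k. g k \<le> g 0 \<and> (g k = g 0 \<longrightarrow> le 0 k))"
    have m0: "m = g 0" using B ge mr by (metis antisym rangeE)
    have "(THE j. ?P j) = 0"
    proof (rule the_equality)
      show "?P 0" using B m0 by auto
      fix j assume "?P j" then show "j = 0" using B m0 tio_props(2)[OF ord] by auto
    qed
    then show "first_max le g = Some 0" using fm m0 B by simp
  qed
qed


lemma Max_split_nonneg:
  fixes v :: "'i \<Rightarrow> real"
  assumes "finite S" "p \<in> S" "\<And>t. t \<in> S \<Longrightarrow> v t \<ge> 0"
  shows "Max (v ` S) = max (v p) (Max (insert 0 (v ` (S - {p}))))"
proof (cases "S - {p} = {}")
  case True
  then have "S = {p}" using assms(2) by auto
  then show ?thesis using assms by simp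
next
  case False
  have S: "S = insert p (S - {p})" using assms(2) by auto
  have "v ` S = insert (v p) (v ` (S - {p}))" using assms(2) by auto
  then have "Max (v ` S) = max (v p) (Max (v ` (S - {p})))"
    using False assms(1) by simp
  moreover have "Max (insert 0 (v ` (S - {p}))) = Max (v ` (S - {p}))"
  proof -
    obtain t where "t \<in> S - {p}" using False by auto
    then have "0 \<le> Max (v ` (S - {p}))" using assms by (meson DiffD1 Max_ge finite_Diff finite_imageI image_eqI order_trans)
    then show ?thesis using False assms(1) by simp
  qed
  ultimately show ?thesis by simp
qed

locale spec =
  fixes N :: "'b measure" and Z :: "'b \<Rightarrow> int^'d \<Rightarrow> real" and le :: "int^'d \<Rightarrow> int^'d \<Rightarrow> bool"
  assumes order: "transl_inv_total_order le"
    and PN: "prob_space N"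
    and Z_rv[measurable]: "\<And>t. (\<lambda>\<omega>. Z \<omega> t) \<in> borel_measurable N"
    and Z_nonneg: "\<And>\<omega> t. \<omega> \<in> space N \<Longrightarrow> Z \<omega> t \<ge> 0"
    and Z_mean: "\<And>t. integral\<^sup>L N (\<lambda>\<omega>. Z \<omega> t) = 1"
begin

definition Cd where "Cd S b p \<omega> = (\<forall>k\<in>S. b k * Z \<omega> k \<le> b p * Z \<omega> p \<and> (b k * Z \<omega> k = b p * Z \<omega> p \<longrightarrow> le p k))"
definition Q where "Q S b p = integral\<^sup>L N (\<lambda>\<omega>. Z \<omega> p * (if Cd S b p \<omega> then 1 else 0))"
definition Wt :: "(int^'d \<Rightarrow> real) \<Rightarrow> int^'d \<Rightarrow> real \<Rightarrow> nat \<Rightarrow> int^'d \<Rightarrow> real" where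
  "Wt b p e n k = (if k = p then b p + e else if le p k then b k else (1 + 1/real (Suc n)) * b k)"
definition MX where "MX S w \<omega> = Max ((\<lambda>t. w t * Z \<omega> t) ` S)"
definition Phi where "Phi S w = integral\<^sup>L N (MX S w)"

lemma Z_int: "integrable N (\<lambda>\<omega>. Z \<omega> t)"
  using Z_mean[of t] not_integrable_integral_eq by fastforce

lemma Cd_meas[measurable]: "finite S \<Longrightarrow> Measurable.pred N (Cd S b p)"
  unfolding Cd_def by measurable

lemma MX_meas[measurable]: "finite S \<Longrightarrow> MX S w \<in> borel_measurable N"
  unfolding MX_def by measurable

lemma MX_int: assumes "finite S" shows "integrable N (MX S w)"
  unfolding MX_def using assms
proof (induction S rule: finite_induct)
  case empty then show ?case
    using finite_measure.integrable_const[OF prob_space.finite_measure[OF PN]] by simp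
next
  case (insert x F)
  show ?case
  proof (cases "F = {}")
    case True then show ?thesis using Z_int by simp
  next
    case False
    have "integrable N (\<lambda>\<omega>. max (w x * Z \<omega> x) (Max ((\<lambda>t. w t * Z \<omega> t) ` F)))"
      using insert Z_int by (intro integrable_max) auto
    then show ?thesis using insert False by simp
  qed
qed

end

lemma inv_lim: "(\<lambda>n. 1 / real (Suc n)) \<longlonglongrightarrow> 0"
  using LIMSEQ_inverse_real_of_nat by (simp add: inverse_eq_divide)

lemma lim_a: "(\<lambda>n. (1 + 1 / real (Suc n)) * u) \<longlonglongrightarrow> (u::real)"
  using tendsto_mult[OF tendsto_add[OF tendsto_const inv_lim] tendsto_const, of 1 u] by simp

lemma lim_b: "(\<lambda>n. c + z / real (Suc n)^2) \<longlonglongrightarrow> (c::real)"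
proof -
  have "(\<lambda>n. c + z * (1 / real (Suc n)) * (1 / real (Suc n))) \<longlonglongrightarrow> c + z * 0 * 0"
    by (intro tendsto_intros inv_lim)
  then show ?thesis by (simp add: power2_eq_square)
qed

lemma lim_c: "(\<lambda>n. z / real (Suc n)) \<longlonglongrightarrow> (0::real)"
  using tendsto_mult[OF tendsto_const inv_lim, of z] by simp

lemma max_diff_bound: "0 \<le> (d::real) \<Longrightarrow> \<bar>max (c + d) R - max c R\<bar> \<le> d"
  by (auto simp: max_def)

context spec begin

lemma Wt_p: "Wt b p e n p = b p + e" unfolding Wt_def by simp
lemma Wt_np: "t \<noteq> p \<Longrightarrow> Wt b p e n t = Wt b p 0 n t" unfolding Wt_def by simp
lemma Wt_ge: "t \<noteq> p \<Longrightarrow> b t \<ge> 0 \<Longrightarrow> Wt b p 0 n t \<ge> b t"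
  unfolding Wt_def by (auto simp: field_simps)

lemma MX_split:
  assumes S: "finite S" "p \<in> S" and bpos: "\<And>k. k \<in> S \<Longrightarrow> b k > 0" and e: "e \<ge> 0"
    and \<omega>: "\<omega> \<in> space N"
  shows "MX S (Wt b p e n) \<omega> = max ((b p + e) * Z \<omega> p) (Max (insert 0 ((\<lambda>t. Wt b p 0 n t * Z \<omega> t) ` (S - {p}))))"
proof -
  have nn: "Wt b p e n t * Z \<omega> t \<ge> 0" if "t \<in> S" for t
  proof -
    have "Wt b p e n t \<ge> 0"
    proof (cases "t = p")
      case True then show ?thesis using Wt_p bpos that e by (metis add_nonneg_nonneg less_imp_le)
    next
      case False
      have "Wt b p 0 n t \<ge> b t" using Wt_ge[of t p b n] False bpos[OF that] by auto
      then show ?thesis using Wt_np[OF False, of b e n] bpos[OF that] by linarith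
    qed
    then show ?thesis using Z_nonneg[OF \<omega>] by simp
  qed
  have "MX S (Wt b p e n) \<omega> = max (Wt b p e n p * Z \<omega> p) (Max (insert 0 ((\<lambda>t. Wt b p e n t * Z \<omega> t) ` (S - {p}))))"
    unfolding MX_def by (rule Max_split_nonneg[OF S nn])
  moreover have "(\<lambda>t. Wt b p e n t * Z \<omega> t) ` (S - {p}) = (\<lambda>t. Wt b p 0 n t * Z \<omega> t) ` (S - {p})"
    using Wt_np[of _ p b e n] by (intro image_cong) auto
  ultimately show ?thesis by (simp add: Wt_p)
qed

lemma conv:
  assumes S: "finite S" "p \<in> S" and bpos: "\<And>k. k \<in> S \<Longrightarrow> b k > 0"
  shows "(\<lambda>n. real (Suc n)^2 * (Phi S (Wt b p (1/real (Suc n)^2) n) - Phi S (Wt b p 0 n))) \<longlonglongrightarrow> Q S b p"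
proof -
  define D where "D n \<omega> = real (Suc n)^2 * (MX S (Wt b p (1/real (Suc n)^2) n) \<omega> - MX S (Wt b p 0 n) \<omega>)" for n \<omega>
  define f where "f \<omega> = Z \<omega> p * (if Cd S b p \<omega> then 1 else 0)" for \<omega>
  define R where "R n \<omega> = Max (insert 0 ((\<lambda>t. Wt b p 0 n t * Z \<omega> t) ` (S - {p})))" for n \<omega>
  have Dint: "integral\<^sup>L N (D n) = real (Suc n)^2 * (Phi S (Wt b p (1/real (Suc n)^2) n) - Phi S (Wt b p 0 n))" for n
    unfolding D_def Phi_def using MX_int[OF S(1)] by simp
  have Dform: "D n \<omega> = real (Suc n)^2 * (max (b p * Z \<omega> p + Z \<omega> p / real (Suc n)^2) (R n \<omega>) - max (b p * Z \<omega> p) (R n \<omega>))"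
    if \<omega>: "\<omega> \<in> space N" for n \<omega>
  proof -
    have "MX S (Wt b p (1/real (Suc n)^2) n) \<omega> = max ((b p + 1/real (Suc n)^2) * Z \<omega> p) (R n \<omega>)"
      unfolding R_def by (rule MX_split[OF S bpos _ \<omega>]) auto
    moreover have "MX S (Wt b p 0 n) \<omega> = max ((b p + 0) * Z \<omega> p) (R n \<omega>)"
      unfolding R_def by (rule MX_split[OF S bpos _ \<omega>]) auto
    ultimately show ?thesis unfolding D_def by (simp add: distrib_right)
  qed
  have "(\<lambda>n. integral\<^sup>L N (D n)) \<longlonglongrightarrow> integral\<^sup>L N f"
  proof (rule integral_dominated_convergence[where w = "\<lambda>\<omega>. Z \<omega> p"])
    show "f \<in> borel_measurable N" unfolding f_def using Cd_meas[OF S(1)] by measurable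
    show "D n \<in> borel_measurable N" for n unfolding D_def using MX_meas[OF S(1)] by measurable
    show "integrable N (\<lambda>\<omega>. Z \<omega> p)" by (rule Z_int)
    show "AE \<omega> in N. norm (D n \<omega>) \<le> Z \<omega> p" for n
    proof (rule AE_I2)
      fix \<omega> assume \<omega>: "\<omega> \<in> space N"
      have z: "Z \<omega> p \<ge> 0" using Z_nonneg[OF \<omega>] .
      have "\<bar>max (b p * Z \<omega> p + Z \<omega> p / real (Suc n)^2) (R n \<omega>) - max (b p * Z \<omega> p) (R n \<omega>)\<bar> \<le> Z \<omega> p / real (Suc n)^2"
        by (rule max_diff_bound) (use z in simp)
      then have "real (Suc n)^2 * \<bar>max (b p * Z \<omega> p + Z \<omega> p / real (Suc n)^2) (R n \<omega>) - max (b p * Z \<omega> p) (R n \<omega>)\<bar>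
          \<le> real (Suc n)^2 * (Z \<omega> p / real (Suc n)^2)"
        by (intro mult_left_mono) auto
      then show "norm (D n \<omega>) \<le> Z \<omega> p" using Dform[OF \<omega>, of n] by (simp add: abs_mult)
    qed
    show "AE \<omega> in N. (\<lambda>n. D n \<omega>) \<longlonglongrightarrow> f \<omega>"
    proof (rule AE_I2)
      fix \<omega> assume \<omega>: "\<omega> \<in> space N"
      have z: "Z \<omega> p \<ge> 0" using Z_nonneg[OF \<omega>] .
      define c where "c = b p * Z \<omega> p"
      have ev: "eventually (\<lambda>n. D n \<omega> = f \<omega>) sequentially"
      proof (cases "Z \<omega> p = 0")
        case True then show ?thesis using Dform[OF \<omega>] unfolding f_def by simp
      next
        case False
        then have zp: "Z \<omega> p > 0" using z by simp
        have cpos: "c > 0" unfolding c_def using zp bpos[OF S(2)] by simp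
        show ?thesis
        proof (cases "Cd S b p \<omega>")
          case True
          have "\<forall>t\<in>S - {p}. eventually (\<lambda>n. Wt b p 0 n t * Z \<omega> t \<le> c) sequentially"
          proof
            fix t assume t: "t \<in> S - {p}"
            have C: "b t * Z \<omega> t \<le> c \<and> (b t * Z \<omega> t = c \<longrightarrow> le p t)"
              using True t unfolding Cd_def c_def by auto
            show "eventually (\<lambda>n. Wt b p 0 n t * Z \<omega> t \<le> c) sequentially"
            proof (cases "le p t")
              case True then show ?thesis using C t unfolding Wt_def by auto
            next
              case False
              then have lt: "b t * Z \<omega> t < c" using C by auto
              have WtF: "Wt b p 0 n t = (1 + 1 / real (Suc n)) * b t" for n using False t unfolding Wt_def by auto
              have "eventually (\<lambda>n. (1 + 1 / real (Suc n)) * (b t * Z \<omega> t) < c) sequentially"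
                by (rule order_tendstoD(2)[OF lim_a lt])
              then show ?thesis
                by (rule eventually_mono) (simp only: WtF mult.assoc less_imp_le)
            qed
          qed
          then have "eventually (\<lambda>n. \<forall>t\<in>S - {p}. Wt b p 0 n t * Z \<omega> t \<le> c) sequentially"
            using S(1) by (intro eventually_ball_finite) auto
          then show ?thesis
          proof eventually_elim
            case (elim n)
            then have "R n \<omega> \<le> c" unfolding R_def using S(1) cpos by simp
            moreover have "Z \<omega> p / real (Suc n)^2 > 0" using zp by simp
            ultimately have "max (c + Z \<omega> p / real (Suc n)^2) (R n \<omega>) = c + Z \<omega> p / real (Suc n)^2"
              "max c (R n \<omega>) = c" by auto
            then show ?case using Dform[OF \<omega>, of n] True unfolding f_def c_def[symmetric]
              by simp
          qed
        next
          case False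
          then obtain t where t: "t \<in> S" "\<not> (b t * Z \<omega> t \<le> c \<and> (b t * Z \<omega> t = c \<longrightarrow> le p t))"
            unfolding Cd_def c_def by auto
          have tp: "t \<noteq> p" using t tio_props(1)[OF order] unfolding c_def by auto
          have "eventually (\<lambda>n. c + Z \<omega> p / real (Suc n)^2 < Wt b p 0 n t * Z \<omega> t) sequentially"
          proof (cases "b t * Z \<omega> t > c")
            case True
            have "eventually (\<lambda>n. c + Z \<omega> p / real (Suc n)^2 < b t * Z \<omega> t) sequentially"
              by (rule order_tendstoD(2)[OF lim_b True])
            then show ?thesis
            proof eventually_elim
              case (elim n)
              have "b t * Z \<omega> t \<le> Wt b p 0 n t * Z \<omega> t"
                using Wt_ge[OF tp, of b n] bpos[OF t(1)] Z_nonneg[OF \<omega>, of t] by (intro mult_right_mono) auto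
              then show ?case using elim by linarith
            qed
          next
            case False
            then have eq: "b t * Z \<omega> t = c" and nle: "\<not> le p t" using t by auto
            have "eventually (\<lambda>n. Z \<omega> p / real (Suc n) < c) sequentially"
              by (rule order_tendstoD(2)[OF lim_c cpos])
            then show ?thesis
            proof eventually_elim
              case (elim n)
              have W: "Wt b p 0 n t * Z \<omega> t = c + c / real (Suc n)"
                using tp nle eq unfolding Wt_def by (simp add: field_simps)
              have "Z \<omega> p / real (Suc n)^2 = (Z \<omega> p / real (Suc n)) / real (Suc n)"
                by (simp add: power2_eq_square)
              also have "\<dots> < c / real (Suc n)"
                using elim by (intro divide_strict_right_mono) auto
              finally show ?case using W by simp
            qed
          qed
          then show ?thesis
          proof eventually_elim
            case (elim n)
            have "Wt b p 0 n t * Z \<omega> t \<le> R n \<omega>" unfolding R_def using t(1) tp S(1) by (intro Max_ge) auto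
            then have "R n \<omega> > c + Z \<omega> p / real (Suc n)^2" using elim by linarith
            moreover have "Z \<omega> p / real (Suc n)^2 \<ge> 0" using z by simp
            ultimately have "max (c + Z \<omega> p / real (Suc n)^2) (R n \<omega>) = R n \<omega>"
              "max c (R n \<omega>) = R n \<omega>" by auto
            then show ?case using Dform[OF \<omega>, of n] False unfolding f_def c_def[symmetric]
              by simp
          qed
        qed
      qed
      show "(\<lambda>n. D n \<omega>) \<longlonglongrightarrow> f \<omega>" by (rule tendsto_eventually[OF ev])
    qed
  qed
  then show ?thesis using Dint unfolding Q_def f_def by simp
qed

end


context spec begin

lemma Wt_pos: assumes "k \<in> S" "\<And>k. k \<in> S \<Longrightarrow> b k > 0" "e \<ge> 0" "p \<in> S"
  shows "Wt b p e n k > 0"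
proof -
  have "b k > 0" "b p > 0" using assms by auto
  moreover have "(1 + 1 / real (Suc n)) > 0" by (simp add: add_pos_nonneg)
  ultimately show ?thesis unfolding Wt_def using assms(3) by auto
qed

lemma Wt_shift: "(\<lambda>k. Wt b p e n (k + p)) = Wt (\<lambda>k. b (k + p)) 0 e n"
proof
  fix k
  have "le p (k + p) \<longleftrightarrow> le 0 k" using tio_props(5)[OF order, of 0 p k] by simp
  moreover have "k + p = p \<longleftrightarrow> k = 0" by auto
  ultimately show "Wt b p e n (k + p) = Wt (\<lambda>k. b (k + p)) 0 e n k" unfolding Wt_def by simp
qed

lemma Q_shift:
  assumes S: "finite S" "p \<in> S" and bpos: "\<And>k. k \<in> S \<Longrightarrow> b k > 0"
    and inv: "\<And>w. (\<And>k. k \<in> S \<Longrightarrow> w k > 0) \<Longrightarrow> Phi S w = Phi ((\<lambda>k. k - p) ` S) (\<lambda>k. w (k + p))"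
  shows "Q S b p = Q ((\<lambda>k. k - p) ` S) (\<lambda>k. b (k + p)) 0"
proof -
  let ?S = "(\<lambda>k. k - p) ` S" and ?b = "\<lambda>k. b (k + p)"
  have S': "finite ?S" "0 \<in> ?S" using S by auto
  have bpos': "\<And>k. k \<in> ?S \<Longrightarrow> ?b k > 0" using bpos by auto
  have eq: "Phi S (Wt b p e n) = Phi ?S (Wt ?b 0 e n)" if "e \<ge> 0" for e n
    using inv[of "Wt b p e n"] Wt_pos[OF _ bpos that S(2)] Wt_shift[of b p e n] by simp
  have "(\<lambda>n. real (Suc n)^2 * (Phi S (Wt b p (1/real (Suc n)^2) n) - Phi S (Wt b p 0 n))) \<longlonglongrightarrow> Q ?S ?b 0"
    using conv[OF S' bpos'] by (simp add: eq)
  with conv[OF S bpos] show ?thesis by (rule LIMSEQ_unique)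
qed

lemma Cd_int: "finite S \<Longrightarrow> integrable N (\<lambda>\<omega>. Z \<omega> i * (if Cd S b i \<omega> then 1 else 0))"
proof -
  assume S: "finite S"
  show ?thesis
  proof (rule Bochner_Integration.integrable_bound[OF Z_int[of i]])
    show "(\<lambda>\<omega>. Z \<omega> i * (if Cd S b i \<omega> then 1 else 0)) \<in> borel_measurable N"
      using Cd_meas[OF S] by measurable
    show "AE \<omega> in N. norm (Z \<omega> i * (if Cd S b i \<omega> then 1 else 0)) \<le> norm (Z \<omega> i)"
      by (rule AE_I2) auto
  qed
qed

lemma MX_decomp:
  assumes S: "finite S" "S \<noteq> {}" and \<omega>: "\<omega> \<in> space N"
  shows "MX S b \<omega> = (\<Sum>i\<in>S. b i * (Z \<omega> i * (if Cd S b i \<omega> then 1 else 0)))"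
proof -
  define u where "u t = b t * Z \<omega> t" for t
  define m where "m = Max (u ` S)"
  have fin: "finite {i\<in>S. u i = m}" using S(1) by simp
  have ne: "{i\<in>S. u i = m} \<noteq> {}"
  proof -
    have "m \<in> u ` S" unfolding m_def using S by (intro Max_in) auto
    then show ?thesis by auto
  qed
  obtain i0 where i0a: "i0 \<in> {i\<in>S. u i = m}" and i0b: "\<forall>k\<in>{i\<in>S. u i = m}. le i0 k"
    using le_least_exists[OF order fin ne] by blast
  have i0: "i0 \<in> S" "u i0 = m" "\<And>k. k \<in> S \<Longrightarrow> u k = m \<Longrightarrow> le i0 k"
    using i0a i0b by auto
  have um: "u k \<le> m" if "k \<in> S" for k unfolding m_def using S that by simp
  have Cd_iff: "Cd S b i \<omega> \<longleftrightarrow> i = i0" if i: "i \<in> S" for i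
  proof
    assume C: "Cd S b i \<omega>"
    then have "u i0 \<le> u i" "u i0 = u i \<longrightarrow> le i i0" using i0(1) unfolding Cd_def u_def by auto
    then have "u i = m" "le i i0" using um[OF i] i0(2) by auto
    then show "i = i0" using i0(3)[OF i] tio_props(2)[OF order] by blast
  next
    assume "i = i0"
    then show "Cd S b i \<omega>" unfolding Cd_def using um i0 unfolding u_def by auto
  qed
  have "(\<Sum>i\<in>S. b i * (Z \<omega> i * (if Cd S b i \<omega> then 1 else 0))) = (\<Sum>i\<in>S. if i = i0 then u i else 0)"
    using Cd_iff unfolding u_def by (intro sum.cong) auto
  also have "\<dots> = u i0" using S i0(1) by simp
  also have "\<dots> = MX S b \<omega>" unfolding MX_def m_def[symmetric] u_def[symmetric] using i0(2) by simp
  finally show ?thesis by simp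
qed

lemma Phi_decomp:
  assumes S: "finite S" "S \<noteq> {}"
  shows "Phi S b = (\<Sum>i\<in>S. b i * Q S b i)"
proof -
  have "Phi S b = integral\<^sup>L N (\<lambda>\<omega>. \<Sum>i\<in>S. b i * (Z \<omega> i * (if Cd S b i \<omega> then 1 else 0)))"
    unfolding Phi_def by (rule Bochner_Integration.integral_cong) (use MX_decomp[OF S] in auto)
  also have "\<dots> = (\<Sum>i\<in>S. b i * Q S b i)"
  proof -
    have "integral\<^sup>L N (\<lambda>\<omega>. \<Sum>i\<in>S. b i * (Z \<omega> i * (if Cd S b i \<omega> then 1 else 0)))
        = (\<Sum>i\<in>S. integral\<^sup>L N (\<lambda>\<omega>. b i * (Z \<omega> i * (if Cd S b i \<omega> then 1 else 0))))"
      by (rule Bochner_Integration.integral_sum[where f="\<lambda>i \<omega>. b i * (Z \<omega> i * (if Cd S b i \<omega> then 1 else 0))"])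
        (intro integrable_mult_right Cd_int[OF S(1)])
    then show ?thesis unfolding Q_def by simp
  qed
  finally show ?thesis .
qed

end

theorem mainTheorem7:
  fixes M :: "'a measure" and N :: "'b measure" and K :: "'c measure"
    and X :: "'a \<Rightarrow> int^'d \<Rightarrow> real"
    and Z :: "'b \<Rightarrow> int^'d \<Rightarrow> real"
    and \<Theta> :: "'c \<Rightarrow> int^'d \<Rightarrow> real"
    and le :: "int^'d \<Rightarrow> int^'d \<Rightarrow> bool"
    and x :: "int^'d \<Rightarrow> ereal"
  assumes order: "transl_inv_total_order le"
    and PM: "prob_space M" and PN: "prob_space N" and PK: "prob_space K"
    and X_rv: "\<And>t. (\<lambda>\<omega>. X \<omega> t) \<in> borel_measurable M"
    and frechet: "\<And>t (y::real). y > 0 \<Longrightarrow>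
        measure M {\<omega>\<in>space M. X \<omega> t \<le> y} = exp (- 1 / y)"
    and max_stable: "\<And>T (y::int^'d \<Rightarrow> real) (n::nat). finite T \<Longrightarrow> n \<ge> 1 \<Longrightarrow>
        (\<forall>t\<in>T. y t > 0) \<Longrightarrow>
        measure M {\<omega>\<in>space M. \<forall>t\<in>T. X \<omega> t \<le> real n * y t} ^ n
          = measure M {\<omega>\<in>space M. \<forall>t\<in>T. X \<omega> t \<le> y t}"
    and stationary: "\<And>h T (y::int^'d \<Rightarrow> real). finite T \<Longrightarrow>
        measure M {\<omega>\<in>space M. \<forall>t\<in>T. X \<omega> (t + h) \<le> y t}
          = measure M {\<omega>\<in>space M. \<forall>t\<in>T. X \<omega> t \<le> y t}"
    and Z_rv: "\<And>t. (\<lambda>\<omega>. Z \<omega> t) \<in> borel_measurable N"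
    and Z_nonneg: "\<And>\<omega> t. \<omega> \<in> space N \<Longrightarrow> Z \<omega> t \<ge> 0"
    and Z_mean: "\<And>t. integral\<^sup>L N (\<lambda>\<omega>. Z \<omega> t) = 1"
    and spectral: "\<And>T (y::int^'d \<Rightarrow> real). finite T \<Longrightarrow> T \<noteq> {} \<Longrightarrow> (\<forall>t\<in>T. y t > 0) \<Longrightarrow>
        - ln (measure M {\<omega>\<in>space M. \<forall>t\<in>T. X \<omega> t \<le> y t})
          = integral\<^sup>L N (\<lambda>\<omega>. Max ((\<lambda>t. Z \<omega> t / y t) ` T))"
    and Theta_meas: "\<Theta> \<in> K \<rightarrow>\<^sub>M (\<Pi>\<^sub>M t\<in>UNIV. borel)"
    and Theta_law: "\<And>A. A \<in> sets (\<Pi>\<^sub>M t\<in>UNIV. (borel :: real measure)) \<Longrightarrow>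
        measure K (\<Theta> -` A \<inter> space K)
          = integral\<^sup>L N (\<lambda>\<omega>. Z \<omega> 0 * indicator A (\<lambda>t. Z \<omega> t / Z \<omega> 0))"
    and x_pos: "\<And>i. x i > 0"
    and x_fin: "finite {i. x i \<noteq> \<infinity>}"
  shows "- ln (measure M {\<omega>\<in>space M. \<forall>i. ereal (X \<omega> i) \<le> x i})
       = (\<Sum>\<^sub>\<infinity>i. real_of_ereal (1 / x i) *
            measure K {\<omega>\<in>space K.
               first_max le (\<lambda>j. real_of_ereal (ereal (\<Theta> \<omega> j) / x (j + i))) = Some 0})"
proof -
  interpret spec N Z le by (rule spec.intro[OF order PN Z_rv Z_nonneg Z_mean])
  interpret M: prob_space M by (rule PM)
  interpret K: prob_space K by (rule PK)
  define T where "T = {i. x i \<noteq> \<infinity>}"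
  define a where "a t = 1 / real_of_ereal (x t)" for t
  have finT: "finite T" using x_fin unfolding T_def .
  have xT: "x t = ereal (1 / a t)" "a t > 0" if "t \<in> T" for t
  proof -
    have ninf: "x t \<noteq> \<infinity>" using that unfolding T_def by simp
    obtain r where r: "x t = ereal r"
    proof (cases "x t")
      case (real r) then show ?thesis using that by simp
    next
      case PInf then show ?thesis using ninf by simp
    next
      case MInf then show ?thesis using x_pos[of t] by simp
    qed
    then have "r > 0" using x_pos[of t] by simp
    then show "x t = ereal (1 / a t)" "a t > 0" unfolding a_def using r by auto
  qed
  have xnT: "x t = \<infinity>" if "t \<notin> T" for t using that unfolding T_def by auto
  have link: "- ln (measure M {\<omega>\<in>space M. \<forall>t\<in>S. X \<omega> t \<le> 1 / w t}) = Phi S w"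
    if S: "finite S" "S \<noteq> {}" and w: "\<And>t. t \<in> S \<Longrightarrow> w t > 0" for S w
  proof -
    have "- ln (measure M {\<omega>\<in>space M. \<forall>t\<in>S. X \<omega> t \<le> 1 / w t})
        = integral\<^sup>L N (\<lambda>\<omega>. Max ((\<lambda>t. Z \<omega> t / (1 / w t)) ` S))"
      by (rule spectral[OF S]) (use w in auto)
    also have "\<dots> = Phi S w" unfolding Phi_def MX_def
      by (rule Bochner_Integration.integral_cong) (auto simp: mult.commute intro!: arg_cong[where f=Max] image_cong)
    finally show ?thesis .
  qed
  have shift: "Phi S w = Phi ((\<lambda>k. k - p) ` S) (\<lambda>k. w (k + p))"
    if S: "finite S" "p \<in> S" and w: "\<And>t. t \<in> S \<Longrightarrow> w t > 0" for S w p
  proof -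
    let ?S = "(\<lambda>k. k - p) ` S"
    have "{\<omega>\<in>space M. \<forall>t\<in>?S. X \<omega> (t + p) \<le> 1 / w (t + p)} = {\<omega>\<in>space M. \<forall>t\<in>S. X \<omega> t \<le> 1 / w t}"
      by auto
    moreover have "measure M {\<omega>\<in>space M. \<forall>t\<in>?S. X \<omega> (t + p) \<le> 1 / w (t + p)}
        = measure M {\<omega>\<in>space M. \<forall>t\<in>?S. X \<omega> t \<le> 1 / w (t + p)}"
      by (rule stationary[of ?S p "\<lambda>t. 1 / w (t + p)"]) (use S(1) in simp)
    ultimately have m1: "measure M {\<omega>\<in>space M. \<forall>t\<in>S. X \<omega> t \<le> 1 / w t}
        = measure M {\<omega>\<in>space M. \<forall>t\<in>?S. X \<omega> t \<le> 1 / w (t + p)}" by simp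
    have e2: "- ln (measure M {\<omega>\<in>space M. \<forall>t\<in>?S. X \<omega> t \<le> 1 / w (t + p)}) = Phi ?S (\<lambda>k. w (k + p))"
      by (rule link) (use S w in auto)
    have e1: "- ln (measure M {\<omega>\<in>space M. \<forall>t\<in>S. X \<omega> t \<le> 1 / w t}) = Phi S w"
      by (rule link) (use S w in auto)
    show ?thesis by (metis e1 e2 m1)
  qed
  have Lset: "{\<omega>\<in>space M. \<forall>i. ereal (X \<omega> i) \<le> x i} = {\<omega>\<in>space M. \<forall>t\<in>T. X \<omega> t \<le> 1 / a t}"
  proof -
    have "(\<forall>i. ereal (X \<omega> i) \<le> x i) \<longleftrightarrow> (\<forall>t\<in>T. X \<omega> t \<le> 1 / a t)" for \<omega>
    proof
      assume "\<forall>i. ereal (X \<omega> i) \<le> x i"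
      then show "\<forall>t\<in>T. X \<omega> t \<le> 1 / a t" using xT by (metis ereal_less_eq(3))
    next
      assume A: "\<forall>t\<in>T. X \<omega> t \<le> 1 / a t"
      show "\<forall>i. ereal (X \<omega> i) \<le> x i"
      proof
        fix i show "ereal (X \<omega> i) \<le> x i"
          by (cases "i \<in> T") (use A xT xnT in auto)
      qed
    qed
    then show ?thesis by auto
  qed
  define trm where "trm i = real_of_ereal (1 / x i) *
            measure K {\<omega>\<in>space K.
               first_max le (\<lambda>j. real_of_ereal (ereal (\<Theta> \<omega> j) / x (j + i))) = Some 0}" for i
  have term0: "trm i = 0" if "i \<notin> T" for i unfolding trm_def using xnT[OF that] by simp
  have termT: "trm i = a i * Q T a i" if iT: "i \<in> T" for i
  proof -
    let ?T = "(\<lambda>k. k - i) ` T" and ?a = "\<lambda>k. a (k + i)"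
    define P where "P f = (f 0 * a i > 0 \<and> (\<forall>k\<in>?T. f k * ?a k \<le> f 0 * a i \<and> (f k * ?a k = f 0 * a i \<longrightarrow> le 0 k)))"
      for f :: "int^'d \<Rightarrow> real"
    have charP: "first_max le (\<lambda>j. real_of_ereal (ereal (f j) / x (j + i))) = Some 0 \<longleftrightarrow> P f" for f
    proof -
      let ?g = "\<lambda>j. real_of_ereal (ereal (f j) / x (j + i))"
      have g0: "?g j = 0" if "j \<notin> ?T" for j
      proof -
        have "j + i \<notin> T" using that by (metis (no_types, lifting) add_diff_cancel image_eqI)
        then show ?thesis using xnT by simp
      qed
      have gT: "?g j = f j * ?a j" if "j \<in> ?T" for j
      proof -
        have "j + i \<in> T" using that by auto
        then show ?thesis using xT[of "j + i"] by (simp add: field_simps)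
      qed
      have "0 \<in> ?T" using iT by auto
      have "first_max le ?g = Some 0 \<longleftrightarrow> ?g 0 > 0 \<and> (\<forall>k. ?g k \<le> ?g 0 \<and> (?g k = ?g 0 \<longrightarrow> le 0 k))"
        by (rule first_max_char[OF order _ g0]) (use finT in auto)
      also have "\<dots> \<longleftrightarrow> P f"
      proof
        assume A: "?g 0 > 0 \<and> (\<forall>k. ?g k \<le> ?g 0 \<and> (?g k = ?g 0 \<longrightarrow> le 0 k))"
        then show "P f" unfolding P_def using gT \<open>0 \<in> ?T\<close> by (metis add_0)
      next
        assume A: "P f"
        have "?g 0 = f 0 * a i" using gT[OF \<open>0 \<in> ?T\<close>] by simp
        moreover have "?g k \<le> ?g 0 \<and> (?g k = ?g 0 \<longrightarrow> le 0 k)" for k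
          by (cases "k \<in> ?T") (use A gT g0 \<open>?g 0 = f 0 * a i\<close> in \<open>auto simp: P_def\<close>)
        ultimately show "?g 0 > 0 \<and> (\<forall>k. ?g k \<le> ?g 0 \<and> (?g k = ?g 0 \<longrightarrow> le 0 k))"
          using A unfolding P_def by auto
      qed
      finally show ?thesis .
    qed
    have comp[measurable]: "(\<lambda>f. f k) \<in> borel_measurable (\<Pi>\<^sub>M t\<in>(UNIV :: (int^'d) set). (borel :: real measure))" for k
      by (rule measurable_component_singleton) simp
    have c1: "Measurable.pred (\<Pi>\<^sub>M t\<in>(UNIV :: (int^'d) set). (borel :: real measure)) (\<lambda>f. f k * c \<le> f 0 * d)" for k c d
      unfolding pred_def by (rule borel_measurable_le) (use comp in measurable)
    have c2: "Measurable.pred (\<Pi>\<^sub>M t\<in>(UNIV :: (int^'d) set). (borel :: real measure)) (\<lambda>f. f k * c = f 0 * d)" for k c d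
      unfolding pred_def by (rule borel_measurable_eq) (use comp in measurable)
    have c3: "Measurable.pred (\<Pi>\<^sub>M t\<in>(UNIV :: (int^'d) set). (borel :: real measure)) (\<lambda>f. 0 < f 0 * d)" for d
      using comp[of 0] by measurable
    have c4: "Measurable.pred (\<Pi>\<^sub>M t\<in>(UNIV :: (int^'d) set). (borel :: real measure)) (\<lambda>f. c)" for c
      by simp
    have Pmeas: "Measurable.pred (\<Pi>\<^sub>M t\<in>UNIV. (borel :: real measure)) P"
      unfolding P_def
      by (intro pred_intros_logic(3,4) pred_intros_finite(3) finite_imageI finT c1 c2 c3 c4)
    have spUNIV: "space (\<Pi>\<^sub>M t\<in>(UNIV :: (int^'d) set). (borel :: real measure)) = UNIV" by (simp add: space_PiM)
    have Asets: "{f. P f} \<in> sets (\<Pi>\<^sub>M t\<in>UNIV. (borel :: real measure))"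
      using Pmeas spUNIV unfolding pred_def by simp
    have "measure K {\<omega>\<in>space K. first_max le (\<lambda>j. real_of_ereal (ereal (\<Theta> \<omega> j) / x (j + i))) = Some 0}
        = measure K (\<Theta> -` {f. P f} \<inter> space K)"
      using charP by (intro arg_cong[where f="measure K"]) auto
    also have "\<dots> = integral\<^sup>L N (\<lambda>\<omega>. Z \<omega> 0 * indicator {f. P f} (\<lambda>t. Z \<omega> t / Z \<omega> 0))"
      by (rule Theta_law[OF Asets])
    also have "\<dots> = Q ?T ?a 0" unfolding Q_def
    proof (rule Bochner_Integration.integral_cong[OF refl])
      fix \<omega> assume \<omega>: "\<omega> \<in> space N"
      show "Z \<omega> 0 * indicator {f. P f} (\<lambda>t. Z \<omega> t / Z \<omega> 0) = Z \<omega> 0 * (if Cd ?T ?a 0 \<omega> then 1 else 0)"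
      proof (cases "Z \<omega> 0 = 0")
        case True then show ?thesis by simp
      next
        case False
        then have z: "Z \<omega> 0 > 0" using Z_nonneg[OF \<omega>, of 0] by simp
        have "P (\<lambda>t. Z \<omega> t / Z \<omega> 0) \<longleftrightarrow> Cd ?T ?a 0 \<omega>"
        proof -
          have a1: "Z \<omega> 0 / Z \<omega> 0 * a i > 0" using z xT[OF iT] by simp
          have a2: "Z \<omega> k / Z \<omega> 0 * ?a k \<le> Z \<omega> 0 / Z \<omega> 0 * a i \<longleftrightarrow> ?a k * Z \<omega> k \<le> ?a 0 * Z \<omega> 0" for k
            using z by (simp add: field_simps)
          have a3: "Z \<omega> k / Z \<omega> 0 * ?a k = Z \<omega> 0 / Z \<omega> 0 * a i \<longleftrightarrow> ?a k * Z \<omega> k = ?a 0 * Z \<omega> 0" for k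
            using z by (simp add: field_simps)
          show ?thesis unfolding P_def Cd_def using a1 a2 a3 by simp
        qed
        then show ?thesis by (simp add: indicator_def)
      qed
    qed
    also have "\<dots> = Q T a i"
      by (rule Q_shift[symmetric, OF finT iT]) (use xT shift finT iT in auto)
    moreover have "real_of_ereal (1 / x i) = a i"
    proof -
      have "1 / x i = ereal 1 / ereal (1 / a i)" using xT[OF iT] by (simp add: one_ereal_def)
      also have "\<dots> = ereal (a i)" using xT(2)[OF iT] by simp
      finally show ?thesis by simp
    qed
    ultimately show ?thesis unfolding trm_def by simp
  qed
  have RHS: "(\<Sum>\<^sub>\<infinity>i. trm i) = (\<Sum>i\<in>T. a i * Q T a i)"
  proof -
    have "(\<Sum>\<^sub>\<infinity>i. trm i) = (\<Sum>\<^sub>\<infinity>i\<in>T. trm i)"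
      by (rule infsum_cong_neutral) (use term0 in auto)
    also have "\<dots> = (\<Sum>i\<in>T. trm i)" using finT by simp
    also have "\<dots> = (\<Sum>i\<in>T. a i * Q T a i)" using termT by simp
    finally show ?thesis .
  qed
  show ?thesis
  proof (cases "T = {}")
    case True
    then have "{\<omega>\<in>space M. \<forall>i. ereal (X \<omega> i) \<le> x i} = space M" using Lset by simp
    then show ?thesis using RHS True unfolding trm_def by (simp add: M.prob_space)
  next
    case False
    have "- ln (measure M {\<omega>\<in>space M. \<forall>i. ereal (X \<omega> i) \<le> x i}) = Phi T a"
      unfolding Lset by (rule link[OF finT False]) (use xT in auto)
    also have "\<dots> = (\<Sum>i\<in>T. a i * Q T a i)" by (rule Phi_decomp[OF finT False])
    finally show ?thesis using RHS unfolding trm_def by simp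
  qed
qed

end
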